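(* There is an absolute constant $c>0$ such that for all $\varepsilon,\delta\in(0,1)$ the following holds: any sublinear algorithm which, for every finite input multiset $A\subset\mathbb{R}^d$, outputs a $(1+\varepsilon)$-approximate mean of $A$ with probability at least $1-\delta$ must sample at least $c\,\varepsilon^{-1}\log\delta^{-1}$ points.
   Context: For a finite multiset $A\subset\mathbb{R}^d$ with $|A|=n$, let $\mathrm{Opt}=\min_{x\in\mathbb{R}^d}\sum_{p\in A}\|p-x\|^2$. A point $x$ is a $(1+\varepsilon)$-approximate mean of $A$ if $\sum_{p\in A}\|p-x\|^2\le(1+\varepsilon)\mathrm{Opt}$. A sublinear algorithm accesses the input $A$ only by drawing points independently and uniformly at random from $A$ (it may use internal randomness); its output depends only on the sampled points and its internal randomness. *)

theory Defs
  imports "HOL-Analysis.Analysis" "HOL-Probability.Probability" "HOL-Library.Multiset"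
begin

text \<open>Points of R^d are represented as functions nat => real vanishing outside {..<d}.\<close>

definition Rd :: "nat \<Rightarrow> (nat \<Rightarrow> real) set" where
  "Rd d = {x. \<forall>i\<ge>d. x i = 0}"

definition sqdist :: "nat \<Rightarrow> (nat \<Rightarrow> real) \<Rightarrow> (nat \<Rightarrow> real) \<Rightarrow> real" where
  "sqdist d p x = (\<Sum>i<d. (p i - x i)\<^sup>2)"

definition cost :: "nat \<Rightarrow> (nat \<Rightarrow> real) multiset \<Rightarrow> (nat \<Rightarrow> real) \<Rightarrow> real" where
  "cost d A x = sum_mset (image_mset (\<lambda>p. sqdist d p x) A)"

definition Opt :: "nat \<Rightarrow> (nat \<Rightarrow> real) multiset \<Rightarrow> real" where
  "Opt d A = (INF x\<in>Rd d. cost d A x)"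

definition approx_mean :: "nat \<Rightarrow> real \<Rightarrow> (nat \<Rightarrow> real) multiset \<Rightarrow> (nat \<Rightarrow> real) \<Rightarrow> bool" where
  "approx_mean d eps A x \<longleftrightarrow> x \<in> Rd d \<and> cost d A x \<le> (1 + eps) * Opt d A"

text \<open>A sublinear algorithm drawing m samples: a Markov kernel from the list of
  m i.i.d. uniform samples of A to a probability distribution over outputs (internal randomness).\<close>
definition success_prob ::
  "nat \<Rightarrow> real \<Rightarrow> nat \<Rightarrow> ((nat \<Rightarrow> real) list \<Rightarrow> (nat \<Rightarrow> real) measure)
     \<Rightarrow> (nat \<Rightarrow> real) multiset \<Rightarrow> real" where
  "success_prob d eps m alg A =
     measure_pmf.expectation (replicate_pmf m (pmf_of_multiset A))
       (\<lambda>xs. measure (alg xs) {x. approx_mean d eps A x})"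

end

theory Submission
  imports Defs
begin

lemma pmf_replicate_pmf_rep:
  "pmf (replicate_pmf m P) (replicate m a) = pmf P a ^ m"
proof (induction m)
  case 0 then show ?case by simp
next
  case (Suc m)
  have "replicate_pmf (Suc m) P = map_pmf (\<lambda>(x,xs). x # xs) (pair_pmf P (replicate_pmf m P))"
    by (simp add: pair_pmf_def map_pmf_def bind_assoc_pmf bind_return_pmf)
  moreover have "inj (\<lambda>(x::'a,xs). x # xs)" by (auto simp: inj_def)
  ultimately have "pmf (replicate_pmf (Suc m) P) (replicate (Suc m) a)
      = pmf (pair_pmf P (replicate_pmf m P)) (a, replicate m a)"
    using pmf_map_inj'[of "\<lambda>(x,xs). x # xs" _ "(a, replicate m a)"] by simp
  then show ?case using Suc by (simp add: pmf_pair)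
qed

lemma expect_bound:
  fixes P :: "'a pmf" and f :: "'a \<Rightarrow> real"
  assumes "\<And>x. 0 \<le> f x" "\<And>x. f x \<le> 1"
  shows "measure_pmf.expectation P f \<le> 1 - pmf P z * (1 - f z)"
proof -
  define g where "g = (\<lambda>x. 1 - indicator {z} x * (1 - f z))"
  have fg: "f x \<le> g x" for x using assms by (auto simp: g_def indicator_def)
  have int: "integrable (measure_pmf P) h" if "\<And>x. \<bar>h x\<bar> \<le> 1" for h :: "'a \<Rightarrow> real"
    by (rule measure_pmf.integrable_const_bound[where B=1]) (auto simp: that)
  have ind: "measure_pmf.expectation P (indicator {z}) = pmf P z"
    by (simp add: measure_pmf_single)
  have "measure_pmf.expectation P f \<le> measure_pmf.expectation P g"
    apply (rule integral_mono)
    using assms fg by (auto intro!: int simp: g_def indicator_def abs_le_iff)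
  also have "measure_pmf.expectation P g = 1 - pmf P z * (1 - f z)"
    unfolding g_def
    apply (subst Bochner_Integration.integral_diff)
    using assms apply (auto intro!: int simp: indicator_def abs_le_iff)[2]
    apply (subst integral_mult_left_zero)
    using ind by simp
  finally show ?thesis .
qed

lemma avg_small:
  assumes "prob_space M" "\<And>j. j < K \<Longrightarrow> T j \<in> sets M" "disjoint_family_on T {..<K}" "0 < K"
  shows "\<exists>j<K. measure M (T j) \<le> 1 / real K"
proof (rule ccontr)
  assume "\<not> ?thesis"
  then have gt: "\<And>j. j < K \<Longrightarrow> measure M (T j) > 1 / real K" by force
  interpret prob_space M by fact
  have "(\<Sum>j<K. measure M (T j)) = measure M (\<Union>j<K. T j)"
    using assms by (intro measure_finite_Union[symmetric]) (auto simp: emeasure_finite)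
  also have "\<dots> \<le> 1" by simp
  finally have "(\<Sum>j<K. measure M (T j)) \<le> 1" .
  moreover have "(\<Sum>j<K. measure M (T j)) > (\<Sum>j<K. 1 / real K)"
    using gt assms(4) by (intro sum_strict_mono) auto
  ultimately show False using assms(4) by simp
qed

definition e1 :: "real \<Rightarrow> nat \<Rightarrow> real" where "e1 a = (\<lambda>i. if i = 0 then a else 0)"

lemma e1_Rd: "1 \<le> d \<Longrightarrow> e1 a \<in> Rd d"
  by (auto simp: e1_def Rd_def)

lemma sqdist_e1_ge: "1 \<le> d \<Longrightarrow> sqdist d (e1 a) x \<ge> (a - x 0)^2"
proof -
  assume "1 \<le> d"
  then obtain d' where d: "d = Suc d'" by (cases d) auto
  show ?thesis unfolding sqdist_def d sum.lessThan_Suc_shift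
    by (auto simp: e1_def intro!: sum_nonneg)
qed

lemma sqdist_e1_e1: "1 \<le> d \<Longrightarrow> sqdist d (e1 a) (e1 b) = (a - b)^2"
proof -
  assume "1 \<le> d"
  then obtain d' where d: "d = Suc d'" by (cases d) auto
  show ?thesis unfolding sqdist_def d sum.lessThan_Suc_shift
    by (auto simp: e1_def)
qed

definition inst :: "nat \<Rightarrow> nat \<Rightarrow> real \<Rightarrow> (nat \<Rightarrow> real) multiset" where
  "inst k n t = replicate_mset k (e1 t) + replicate_mset (n - k) (e1 0)"

lemma cost_inst: "cost d (inst k n t) x = real k * sqdist d (e1 t) x + real (n - k) * sqdist d (e1 0) x"
  by (simp add: cost_def inst_def sum_mset_replicate_mset)

lemma approx_inst:
  assumes d: "1 \<le> d" and kn: "0 < k" "k < n" and eps: "0 < eps"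
    and ax: "approx_mean d eps (inst k n t) x"
  shows "(x 0 - real k / real n * t)^2 \<le> eps * (real k / real n) * (1 - real k / real n) * t^2"
proof -
  define p where "p = real k / real n"
  have n0: "real n > 0" using kn by simp
  have kp: "real k = p * real n" and nkp: "real (n - k) = (1 - p) * real n"
    using kn n0 by (auto simp: p_def field_simps of_nat_diff)
  have xR: "x \<in> Rd d" and c: "cost d (inst k n t) x \<le> (1 + eps) * Opt d (inst k n t)"
    using ax by (auto simp: approx_mean_def)
  have "Opt d (inst k n t) \<le> cost d (inst k n t) (e1 (p * t))"
    unfolding Opt_def
  proof (rule cINF_lower)
    show "bdd_below (cost d (inst k n t) ` Rd d)"
      by (rule bdd_belowI[where m=0]) (auto simp: cost_inst sqdist_def intro!: add_nonneg_nonneg mult_nonneg_nonneg sum_nonneg)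
    show "e1 (p * t) \<in> Rd d" using d by (rule e1_Rd)
  qed
  also have "\<dots> = real k * (t - p*t)^2 + real (n-k) * (0 - p*t)^2"
    by (simp add: cost_inst sqdist_e1_e1[OF d])
  finally have o: "Opt d (inst k n t) \<le> real k * (t - p*t)^2 + real (n-k) * (0 - p*t)^2" .
  have l: "real k * (t - x 0)^2 + real (n-k) * (0 - x 0)^2 \<le> cost d (inst k n t) x"
    unfolding cost_inst using sqdist_e1_ge[OF d, of t x] sqdist_e1_ge[OF d, of 0 x]
    by (intro add_mono mult_left_mono) auto
  have "real k * (t - x 0)^2 + real (n-k) * (0 - x 0)^2 \<le> (1 + eps) * (real k * (t - p*t)^2 + real (n-k) * (0 - p*t)^2)"
    using l c o eps by (smt (verit, best) mult_left_mono)
  then have "real n * (p * (t - x 0)^2 + (1 - p) * (x 0)^2) \<le> real n * ((1 + eps) * (p * (t - p*t)^2 + (1-p) * (p*t)^2))"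
    unfolding kp nkp by (simp add: algebra_simps)
  then have "p * (t - x 0)^2 + (1 - p) * (x 0)^2 \<le> (1 + eps) * (p * (t - p*t)^2 + (1-p) * (p*t)^2)"
    using n0 by simp
  then show ?thesis unfolding p_def[symmetric] by (simp add: algebra_simps power2_eq_square)
qed

lemma main_bound:
  fixes eps delta :: real and d m k n :: nat
    and alg :: "(nat \<Rightarrow> real) list \<Rightarrow> (nat \<Rightarrow> real) measure"
  assumes eps: "0 < eps" and kn: "0 < k" "k < n"
    and cond: "eps * (1 - real k / real n) < real k / real n"
    and d: "1 \<le> d"
    and alg: "\<forall>xs. prob_space (alg xs) \<and> sets (alg xs) = sets (\<Pi>\<^sub>M i\<in>UNIV. (borel :: real measure))"
    and succ: "\<forall>A. A \<noteq> {#} \<longrightarrow> set_mset A \<subseteq> Rd d \<longrightarrow> success_prob d eps m alg A \<ge> 1 - delta"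
  shows "(1 - real k / real n) ^ m \<le> delta"
proof -
  define p where "p = real k / real n"
  define q where "q = (1 - p) ^ m"
  define Z where "Z = replicate m (e1 0)"
  define a where "a = eps * p * (1 - p)"
  define s where "s = sqrt a"
  define R where "R = (p + s) / (p - s) + 1"
  define t where "t = (\<lambda>j::nat. R ^ j)"
  define T where "T = (\<lambda>j. {x :: nat \<Rightarrow> real. x 0 \<in> {t j * (p - s) .. t j * (p + s)}})"
  have n0: "real n > 0" using kn by simp
  have p0: "0 < p" and p1: "p < 1" using kn by (auto simp: p_def)
  have a0: "0 \<le> a" using eps p0 p1 by (simp add: a_def)
  have ap: "a < p^2" using cond p0 unfolding a_def p_def[symmetric]
    by (simp add: power2_eq_square mult.assoc mult.commute mult.left_commute)
  have s0: "0 \<le> s" using a0 by (simp add: s_def)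
  have sp: "s < p" unfolding s_def using ap p0 real_sqrt_less_mono[OF ap] by simp
  have R1: "1 \<le> R" using s0 sp by (simp add: R_def)
  have "R * (p - s) = (p + s) + (p - s)" using sp unfolding R_def distrib_right by simp
  then have Rps: "R * (p - s) > p + s" using sp by linarith
  have t0: "t j > 0" for j using R1 by (simp add: t_def)
  have q0: "0 \<le> q" using p1 by (simp add: q_def)
  have algZ: "prob_space (alg Z)" and setsZ: "sets (alg Z) = sets (\<Pi>\<^sub>M i\<in>UNIV. (borel :: real measure))"
    using alg by auto
  have Tmeas: "T j \<in> sets (alg Z)" for j
  proof -
    have "(\<lambda>x. x 0) -` {t j * (p - s) .. t j * (p + s)} \<inter> space (\<Pi>\<^sub>M i\<in>UNIV. (borel :: real measure))
          \<in> sets (\<Pi>\<^sub>M i\<in>UNIV. (borel :: real measure))"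
      by (rule measurable_sets[OF measurable_component_singleton]) auto
    moreover have "(\<lambda>x. x 0) -` {t j * (p - s) .. t j * (p + s)} \<inter> space (\<Pi>\<^sub>M i\<in>UNIV. (borel :: real measure)) = T j"
      by (auto simp: T_def space_PiM)
    ultimately show ?thesis using setsZ by metis
  qed
  have tmono: "t (Suc i) \<le> t j" if "i < j" for i j
    unfolding t_def using R1 that by (intro power_increasing) auto
  have Tdisj_lt: "T i \<inter> T j = {}" if "i < j" for i j
  proof (rule ccontr)
    assume "T i \<inter> T j \<noteq> {}"
    then obtain x where x: "x \<in> T i" "x \<in> T j" by blast
    have c2: "t (Suc i) * (p - s) \<le> t j * (p - s)" using tmono[OF that] sp by (intro mult_right_mono) auto
    have "t (Suc i) * (p - s) = t i * (R * (p - s))" by (simp add: t_def)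
    moreover have "t i * (R * (p - s)) > t i * (p + s)" using Rps t0[of i] by simp
    ultimately have c1: "t i * (p + s) < t (Suc i) * (p - s)" by linarith
    have "x 0 \<le> t i * (p + s)" "t j * (p - s) \<le> x 0" using x by (auto simp: T_def)
    then show False using c1 c2 by linarith
  qed
  have Tdisj: "disjoint_family_on T {..<K}" for K
    unfolding disjoint_family_on_def
    by (metis Tdisj_lt inf_commute linorder_neqE_nat)
  have Kbound: "q * (1 - 1 / real K) \<le> delta" if K0: "0 < K" for K :: nat
  proof -
    interpret Z: prob_space "alg Z" by (rule algZ)
    obtain j where j: "j < K" "measure (alg Z) (T j) \<le> 1 / real K"
      using avg_small[OF algZ Tmeas Tdisj K0] by blast
    define A where "A = inst k n (t j)"
    define S where "S = {x. approx_mean d eps A x}"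
    have ST: "S \<subseteq> T j"
    proof
      fix x assume "x \<in> S"
      then have "(x 0 - p * t j)^2 \<le> a * (t j)^2"
        using approx_inst[OF d kn eps, of "t j" x] by (simp add: S_def A_def a_def p_def)
      also have "a * (t j)^2 = (s * t j)^2" using a0 by (simp add: s_def power_mult_distrib)
      finally have "\<bar>x 0 - p * t j\<bar> \<le> \<bar>s * t j\<bar>" using abs_le_square_iff by blast
      then show "x \<in> T j" using s0 t0[of j] by (auto simp: T_def abs_le_iff algebra_simps)
    qed
    have fS: "measure (alg Z) S \<le> 1 / real K"
      using Z.finite_measure_mono[OF ST Tmeas] j by simp
    have A0: "A \<noteq> {#}" using kn by (simp add: A_def inst_def)
    have AR: "set_mset A \<subseteq> Rd d" using d by (auto simp: A_def inst_def e1_Rd)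
    have ne: "e1 (t j) \<noteq> e1 0" using t0[of j] by (auto simp: e1_def fun_eq_iff)
    have cnt: "count A (e1 0) = n - k" using ne by (simp add: A_def inst_def)
    have sz: "size A = n" using kn by (simp add: A_def inst_def)
    have pz: "pmf (pmf_of_multiset A) (e1 0) = 1 - p"
      using A0 cnt sz kn by (simp add: p_def field_simps of_nat_diff)
    have qz: "pmf (replicate_pmf m (pmf_of_multiset A)) Z = q"
      unfolding Z_def q_def pmf_replicate_pmf_rep pz ..
    have "1 - delta \<le> success_prob d eps m alg A" using succ A0 AR by blast
    also have "\<dots> \<le> 1 - q * (1 - measure (alg Z) S)"
      unfolding success_prob_def S_def[symmetric] qz[symmetric]
      using alg by (intro expect_bound) (auto simp: prob_space.prob_le_1)
    also have "\<dots> \<le> 1 - q * (1 - 1 / real K)"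
      using fS q0 by (intro diff_left_mono mult_left_mono) auto
    finally show ?thesis by simp
  qed
  show ?thesis
  proof (rule ccontr)
    assume "\<not> ?thesis"
    then have qd: "q > delta" by (simp add: q_def p_def)
    obtain K :: nat where K: "q / (q - delta) < real K" using reals_Archimedean2 by blast
    have "0 \<le> q / (q - delta)" using qd q0 by simp
    then have K0: "0 < K" using K by linarith
    have "q < real K * (q - delta)" using K qd by (simp add: field_simps)
    then have "q * (1 - 1 / real K) > delta" using K0 by (simp add: field_simps)
    then show False using Kbound[OF K0] by simp
  qed
qed

theorem theorem5p1:
  shows "\<exists>c>0. \<forall>eps delta. 0 < eps \<and> eps < 1 \<and> 0 < delta \<and> delta < 1 \<longrightarrow>
     (\<forall>(d::nat) (m::nat) (alg :: (nat \<Rightarrow> real) list \<Rightarrow> (nat \<Rightarrow> real) measure).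
        d \<ge> 1 \<longrightarrow>
        (\<forall>xs. prob_space (alg xs) \<and> sets (alg xs) = sets (\<Pi>\<^sub>M i\<in>UNIV. (borel :: real measure))) \<longrightarrow>
        (\<forall>A. A \<noteq> {#} \<longrightarrow> set_mset A \<subseteq> Rd d \<longrightarrow> success_prob d eps m alg A \<ge> 1 - delta) \<longrightarrow>
        real m \<ge> c * (1 / eps) * ln (1 / delta))"
proof (intro exI[of _ "1/2"] conjI allI impI)
  show "(0::real) < 1/2" by simp
  fix eps delta :: real and d m :: nat and alg :: "(nat \<Rightarrow> real) list \<Rightarrow> (nat \<Rightarrow> real) measure"
  assume ed: "0 < eps \<and> eps < 1 \<and> 0 < delta \<and> delta < 1" and d: "1 \<le> d"
    and alg: "\<forall>xs. prob_space (alg xs) \<and> sets (alg xs) = sets (\<Pi>\<^sub>M i\<in>UNIV. (borel :: real measure))"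
    and succ: "\<forall>A. A \<noteq> {#} \<longrightarrow> set_mset A \<subseteq> Rd d \<longrightarrow> success_prob d eps m alg A \<ge> 1 - delta"
  have eps: "0 < eps" "eps < 1" and del: "0 < delta" "delta < 1" using ed by auto
  have lt: "eps / (1 + eps) < 2 * eps / (1 + 2 * eps)" using eps by (simp add: field_simps)
  obtain r where r: "r \<in> \<rat>" "eps / (1 + eps) < r" "r < 2 * eps / (1 + 2 * eps)"
    using Rats_dense_in_real[OF lt] by blast
  obtain a b :: int where ab: "b > 0" "r = of_int a / of_int b"
    using Rats_cases'[OF r(1)] by metis
  have r0: "0 < r" using r(2) eps by (smt (verit) divide_pos_pos)
  have "2 * eps / (1 + 2 * eps) < 1" using eps by simp
  then have r1: "r < 1" using r(3) by linarith
  have a0: "0 < a" using r0 ab by (simp add: zero_less_divide_iff)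
  have ab1: "a < b" using r1 ab by (simp add: divide_less_eq)
  define k where "k = nat a"
  define n where "n = nat b"
  have kn: "0 < k" "k < n" using a0 ab1 by (auto simp: k_def n_def)
  have rp: "real k / real n = r" using a0 ab by (simp add: k_def n_def)
  have cond: "eps * (1 - r) < r" using r(2) eps by (simp add: field_simps)
  have q: "(1 - r) ^ m \<le> delta"
    using main_bound[OF eps(1) kn _ d alg succ] cond rp by simp
  have lb: "1 / (1 + 2 * eps) \<le> 1 - r" using r(3) eps by (simp add: field_simps)
  have "(1 / (1 + 2 * eps)) ^ m \<le> (1 - r) ^ m"
    using lb eps by (intro power_mono) auto
  with q have "(1 / (1 + 2 * eps)) ^ m \<le> delta" by simp
  then have "ln ((1 / (1 + 2 * eps)) ^ m) \<le> ln delta"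
    using eps del by (subst ln_le_cancel_iff) auto
  then have "- (real m * ln (1 + 2 * eps)) \<le> ln delta"
    using eps by (simp add: ln_realpow ln_div)
  moreover have "ln (1 + 2 * eps) \<le> 2 * eps" using eps by (intro ln_add_one_self_le_self) auto
  ultimately have "ln (1 / delta) \<le> real m * (2 * eps)"
    using del by (smt (verit) ln_div ln_one mult_left_mono of_nat_0_le_iff)
  then show "1 / 2 * (1 / eps) * ln (1 / delta) \<le> real m"
    using eps by (simp add: field_simps)
qed

end
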